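(* Let $d\ge 1$ and let $(D,\mathbf{m},E)\in\mathbb{R}\times\mathbb{R}^d\times\mathbb{R}$ satisfy $D>0$ and $E-\sqrt{D^2+|\mathbf{m}|^2}>0$. For $h>1$ define $T(h)=\frac{3h-8}{24}+\frac{\sqrt{(3h+8)^2-96}}{24}$, and for $\Pi\ge E$ define $h(\Pi)=\sqrt{\Pi^2-|\mathbf{m}|^2}/D$ and $S(\Pi)=\Pi^2-\Pi E-D^2 h(\Pi)T(h(\Pi))$. Let $\Pi_*$ denote the unique real root of $S$ in $(E,\infty)$. Then for any $\Pi_r\in[E,\Pi_* )$, the Newton–Raphson iterate \[ \Pi_{r+1}=\Pi_r-\frac{S(\Pi_r)}{S'(\Pi_r)} \] satisfies $\Pi_{r+1}>\Pi_r$.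
   Context: This is the Newton–Raphson iteration (started from $\Pi_0=E$) used to recover primitive variables from conservative variables $(D,\mathbf{m},E)$ (relativistic density, momentum density, energy density) for the relativistic hydrodynamics equations with the equation of state $h=\frac{2(6p^2+4p\rho+\rho^2)}{\rho(3p+2\rho)}$, for which $p=\rho T(h)$ and $\Pi=E+p$. For $\Pi\ge E$ one has $h(\Pi)>1$, and $S$ has exactly one real root in $(E,\infty)$. *)

theory Defs
  imports "HOL-Analysis.Analysis"
begin

definition T_fun :: "real \<Rightarrow> real" where
  "T_fun h = (3*h - 8)/24 + sqrt ((3*h + 8)^2 - 96)/24"

definition h_fun :: "real \<Rightarrow> real^'n \<Rightarrow> real \<Rightarrow> real" where
  "h_fun D m P = sqrt (P^2 - (norm m)^2) / D"

definition S_fun :: "real \<Rightarrow> real^'n \<Rightarrow> real \<Rightarrow> real \<Rightarrow> real" where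
  "S_fun D m E P = P^2 - P*E - D^2 * h_fun D m P * T_fun (h_fun D m P)"

end

theory Submission
  imports Defs
begin

definition Td :: "real \<Rightarrow> real" where
  "Td h = 1/8 + (3*h+8)/(8 * sqrt ((3*h + 8)^2 - 96))"

lemma q_pos:
  fixes h :: real
  assumes "h > 1"
  shows "(3*h + 8)^2 - 96 > 108 - 96"
proof -
  have "3*h+8 > 11" using assms by simp
  then have "(3*h+8)^2 > 11^2"
    using mult_strict_mono[of 11 "3*h+8" 11 "3*h+8"] by (simp add: power2_eq_square)
  then show ?thesis by simp
qed

lemma T_der:
  assumes "h > 1"
  shows "(T_fun has_real_derivative Td h) (at h)"
proof -
  have q: "(3*h + 8)^2 - 96 > 0" using q_pos[OF assms] by simp
  show ?thesis unfolding T_fun_def[abs_def] Td_def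
    using q by (auto intro!: derivative_eq_intros simp: field_simps)
qed

lemma h_der:
  assumes "D > 0" "P > norm m"
  shows "((\<lambda>P. h_fun D m P) has_real_derivative P/(D * sqrt(P^2 - (norm m)^2))) (at P)"
proof -
  have q: "P^2 - (norm m)^2 > 0" using assms
    by (simp add: power_strict_mono)
  show ?thesis unfolding h_fun_def[abs_def]
    using q assms by (auto intro!: derivative_eq_intros simp: field_simps)
qed

lemma T_bound:
  assumes "h > 1"
  shows "T_fun h < h/4" "Td h < 1/2"
proof -
  define x where "x = 3*h+8"
  have x: "x > 11" using assms x_def by simp
  have q: "x^2 - 96 > 12" using q_pos[OF assms] x_def by simp
  have "sqrt (x^2 - 96) < sqrt (x^2)" using real_sqrt_less_mono[of "x^2-96" "x^2"] by simp
  also have "\<dots> = x" using x by simp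
  finally have s1: "sqrt (x^2 - 96) < x" .
  have "T_fun h = (3*h-8)/24 + sqrt(x^2-96)/24" unfolding T_fun_def x_def ..
  then have "T_fun h - h/4 = (sqrt(x^2-96) - x)/24" using x_def by (simp add: field_simps)
  then show "T_fun h < h/4" using s1 by (simp add: field_simps)
  have "(x/3)^2 < x^2 - 96" using q by (simp add: power_divide)
  then have s2: "x/3 < sqrt (x^2 - 96)" by (rule real_less_rsqrt)
  have sp: "sqrt (x^2 - 96) > 0" using q by simp
  have "x / (8 * sqrt (x^2 - 96)) < 3/8" using s2 sp by (simp add: field_simps)
  then show "Td h < 1/2" unfolding Td_def x_def[symmetric] by simp
qed

lemma S_der:
  fixes m :: "real^'n"
  assumes D: "D > 0" and P: "P > sqrt (D^2 + (norm m)^2)"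
  defines "h \<equiv> h_fun D m P"
  defines "hdv \<equiv> P/(D * sqrt(P^2 - (norm m)^2))"
  shows "(S_fun D m E has_real_derivative
           (2*P - E - D^2 * (hdv * T_fun h + h * (Td h * hdv)))) (at P)"
    and "h > 1" and "D^2 * hdv = P / h"
proof -
  have s0: "sqrt (D^2 + (norm m)^2) \<ge> 0" by simp
  have "(sqrt (D^2 + (norm m)^2))^2 < P^2" using P s0 by (rule power_strict_mono) simp
  then have a: "D^2 + (norm m)^2 < P^2" by simp
  have "norm m \<le> sqrt (D^2 + (norm m)^2)" by (rule real_le_rsqrt) simp
  then have Pm: "P > norm m" using P by linarith
  have sq: "sqrt (P^2 - (norm m)^2) > D"
    using a D real_less_rsqrt by simp
  then show h1: "h > 1" unfolding h_def h_fun_def using D by simp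
  have hdr: "((\<lambda>P. h_fun D m P) has_real_derivative hdv) (at P)"
    unfolding hdv_def by (rule h_der[OF D Pm])
  have tdr: "(T_fun has_real_derivative Td h) (at (h_fun D m P))"
    unfolding h_def[symmetric] by (rule T_der[OF h1])
  have ch: "((\<lambda>x. T_fun (h_fun D m x)) has_real_derivative Td h * hdv) (at P)"
    by (rule DERIV_chain2[OF tdr hdr])
  show "(S_fun D m E has_real_derivative
           (2*P - E - D^2 * (hdv * T_fun h + h * (Td h * hdv)))) (at P)"
    unfolding S_fun_def[abs_def]
    apply (rule derivative_eq_intros hdr ch refl)+
    by (simp add: h_def algebra_simps)
  show "D^2 * hdv = P / h" using sq D unfolding h_def h_fun_def hdv_def
    by (simp add: power2_eq_square field_simps)
qed

lemma Sd_pos: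
  fixes m :: "real^'n"
  assumes D: "D > 0" and E: "E - sqrt (D^2 + (norm m)^2) > 0" and P: "P \<ge> E"
  shows "\<exists>y. (S_fun D m E has_real_derivative y) (at P) \<and> y > 0"
proof -
  define h where "h = h_fun D m P"
  define hdv where "hdv = P/(D * sqrt(P^2 - (norm m)^2))"
  have P': "P > sqrt (D^2 + (norm m)^2)" using E P by linarith
  have E0: "E > 0" using E proof -
    have "sqrt (D^2 + (norm m)^2) \<ge> 0" by simp
    then show ?thesis using E by linarith
  qed
  note S = S_der(1)[where E=E, OF D P', folded h_def hdv_def] S_der(2,3)[OF D P', folded h_def hdv_def]
  have h1: "h > 1" by (rule S(2))
  have eq: "2*P - E - D^2 * (hdv * T_fun h + h * (Td h * hdv))
     = 2*P - E - P * (T_fun h / h + Td h)"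
  proof -
    have "D^2 * (hdv * T_fun h + h * (Td h * hdv)) = (D^2 * hdv) * (T_fun h + h * Td h)"
      by (simp add: algebra_simps)
    also have "\<dots> = P / h * (T_fun h + h * Td h)" using S(3) by simp
    also have "\<dots> = P * (T_fun h / h + Td h)" using h1 by (simp add: field_simps)
    finally show ?thesis by simp
  qed
  have b1: "T_fun h / h < 1/4" using T_bound(1)[OF h1] h1 by (simp add: field_simps)
  have b2: "Td h < 1/2" using T_bound(2)[OF h1] .
  have P0: "P > 0" using E0 P by linarith
  have "P * (T_fun h / h + Td h) < P * (3/4)"
    using b1 b2 P0 by (intro mult_strict_left_mono) auto
  then have "2*P - E - P * (T_fun h / h + Td h) > 0" using P P0 by linarith
  then show ?thesis using S(1) eq by auto
qed

theorem lemma2: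
  fixes D E Pstar Pr :: real and m :: "real^'n"
  assumes "D > 0" and "E - sqrt (D^2 + (norm m)^2) > 0"
    and "Pstar > E" and "S_fun D m E Pstar = 0"
    and "E \<le> Pr" and "Pr < Pstar"
  shows "Pr - S_fun D m E Pr / deriv (S_fun D m E) Pr > Pr"
proof -
  have "S_fun D m E Pr < S_fun D m E Pstar"
    using assms(6)
  proof (rule DERIV_pos_imp_increasing)
    fix x assume "Pr \<le> x" "x \<le> Pstar"
    then have "x \<ge> E" using assms(5) by linarith
    then show "\<exists>y. DERIV (S_fun D m E) x :> y \<and> 0 < y"
      using Sd_pos[OF assms(1,2)] by blast
  qed
  then have neg: "S_fun D m E Pr < 0" using assms(4) by simp
  obtain y where y: "(S_fun D m E has_real_derivative y) (at Pr)" "y > 0"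
    using Sd_pos[OF assms(1,2,5)] by blast
  have "deriv (S_fun D m E) Pr = y" using y(1) by (rule DERIV_imp_deriv)
  then have "S_fun D m E Pr / deriv (S_fun D m E) Pr < 0"
    using neg y(2) by (simp add: divide_neg_pos)
  then show ?thesis by linarith
qed

end
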